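(* Let $m\in\{1,2\}$ and let $\gamma_1,\dots,\gamma_m\colon[0,T]\to\overline{\mathbb D}\setminus\{0\}$ be Jordan arcs with $\gamma_k(0)\in\partial\mathbb D$ and $\Gamma_k:=\gamma_k(0,T]\subset\mathbb D$, pairwise disjoint. Then $\alpha_k(t)\le1$ for all $t\in[0,T]$ and all $k$.
   Context: $\mathbb D$ is the unit disk. $g_t$ is the unique conformal map of $\mathbb D\setminus\bigcup_{k=1}^m\gamma_k[0,t]$ onto $\mathbb D$ with $g_t(0)=0$, $g_t'(0)>0$; $h_{k;t}$ is the unique conformal map of $\mathbb D\setminus\gamma_k[0,t]$ onto $\mathbb D$ with $h_{k;t}(0)=0$, $h_{k;t}'(0)>0$; $\zeta_k(t):=h_{k;t}(\gamma_k(t))\in\partial\mathbb D$ (boundary value). $\alpha_k(t):=\big|(g_t\circ h_{k;t}^{-1})'(\zeta_k(t))\big|$, where $g_t\circ h_{k;t}^{-1}$ is extended analytically by Schwarz reflection to a neighborhood of $\zeta_k(t)$. *)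

theory Defs
  imports "HOL-Complex_Analysis.Complex_Analysis"
begin

abbreviation unit_disk :: "complex set" where
  "unit_disk \<equiv> ball 0 1"

definition jordan_arc_on :: "real \<Rightarrow> (real \<Rightarrow> complex) \<Rightarrow> bool" where
  "jordan_arc_on T c \<longleftrightarrow> continuous_on {0..T} c \<and> inj_on c {0..T}"

definition normalized_conformal_map :: "complex set \<Rightarrow> (complex \<Rightarrow> complex) \<Rightarrow> bool" where
  "normalized_conformal_map S f \<longleftrightarrow>
     f holomorphic_on S \<and> inj_on f S \<and> f ` S = unit_disk \<and>
     f 0 = 0 \<and> deriv f 0 \<in> \<real> \<and> Re (deriv f 0) > 0"

end

theory Submission
  imports Defs
begin

lemma norm_add_sq:
  "(cmod (a + complex_of_real s * q))^2 = (cmod a)^2 + 2 * s * Re(cnj a * q) + s^2 * (cmod q)^2"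
  by (simp only: cmod_power2) (simp add: algebra_simps power2_eq_square)

lemma dq_lim:
  assumes "(F has_field_derivative c) (at \<zeta>)" "(p has_field_derivative d) (at 0)" "p 0 = \<zeta>"
  shows "((\<lambda>z. (F (p z) - F \<zeta>)/z) \<longlongrightarrow> c*d) (at 0 within S)"
proof -
  have dF: "(F has_field_derivative c) (at (p 0))" using assms by simp
  have "((F \<circ> p) has_field_derivative c*d) (at 0)"
    using DERIV_chain[OF dF assms(2)] .
  then have "((\<lambda>z. ((F \<circ> p) z - (F \<circ> p) 0)/(z - 0)) \<longlongrightarrow> c*d) (at 0)"
    using has_field_derivative_iff by blast
  then show ?thesis using assms(3) by (auto intro: tendsto_within_subset)
qed

lemma expand_sq:
  assumes "z = complex_of_real s" "s \<noteq> 0" "cmod a = 1"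
  shows "(cmod (F z))^2 = 1 + s * (2*Re(cnj a * ((F z - a)/z)) + s * (cmod ((F z - a)/z))^2)"
proof -
  have "F z = a + complex_of_real s * ((F z - a)/z)" using assms by simp
  then have "(cmod (F z))^2 = (cmod (a + complex_of_real s * ((F z - a)/z)))^2" by simp
  also have "\<dots> = 1 + 2 * s * Re(cnj a * ((F z - a)/z)) + s^2 * (cmod ((F z - a)/z))^2"
    unfolding norm_add_sq assms(3) by simp
  finally show ?thesis by (simp add: algebra_simps power2_eq_square)
qed

lemma boundary_deriv:
  assumes holF: "F holomorphic_on U" and oU: "open U" and zU: "\<zeta> \<in> U" and z1: "norm \<zeta> = 1"
    and bd: "\<And>z. z \<in> U \<Longrightarrow> norm z \<le> 1 \<Longrightarrow> norm z \<le> norm (F z) \<and> norm (F z) \<le> 1"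
  shows "norm (deriv F \<zeta>) \<le> 1"
proof -
  define c where "c = deriv F \<zeta>"
  define a where "a = F \<zeta>"
  have dF: "(F has_field_derivative c) (at \<zeta>)"
    unfolding c_def using holomorphic_derivI[OF holF oU zU] .
  have a1: "norm a = 1" using bd[OF zU] z1 unfolding a_def by linarith
  define Q where "Q = (\<lambda>p z. (F (p z) - a)/z)"
  define E where "E = (\<lambda>p z. 2*Re(cnj a * Q p z) + Re z * (cmod (Q p z))^2)"
  have Elim: "(E p \<longlongrightarrow> 2*Re(cnj a * (c*d))) (at 0 within S)"
    if "(p has_field_derivative d) (at 0)" "p 0 = \<zeta>" for p d S
  proof -
    have "(Q p \<longlongrightarrow> c*d) (at 0 within S)"
      unfolding Q_def a_def using dq_lim[OF dF that] .
    moreover have "((\<lambda>z::complex. Re z) \<longlongrightarrow> 0) (at 0 within S)"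
      using tendsto_Re[OF tendsto_ident_at[of 0 S]] by simp
    ultimately have "(E p \<longlongrightarrow> 2*Re(cnj a * (c*d)) + 0 * (cmod (c*d))^2) (at 0 within S)"
      unfolding E_def by (intro tendsto_intros)
    then show ?thesis by simp
  qed
  have evU: "eventually (\<lambda>z. p z \<in> U) (at 0 within S)"
    if "(p has_field_derivative d) (at 0)" "p 0 = \<zeta>" for p d S
  proof -
    have "isCont p 0" using DERIV_isCont that(1) by blast
    then have "(p \<longlongrightarrow> \<zeta>) (at 0)" using that(2) by (simp add: isCont_def)
    then have "(p \<longlongrightarrow> \<zeta>) (at 0 within S)" by (rule tendsto_mono[OF at_le[OF subset_UNIV]])
    from topological_tendstoD[OF this oU zU] show ?thesis .
  qed
  have eq: "(cmod (F (p z)))^2 = 1 + Re z * E p z" if "z \<in> \<real>" "z \<noteq> 0" for p z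
  proof -
    define s where "s = Re z"
    have s: "z = complex_of_real s" unfolding s_def using that(1) by simp
    have s0: "s \<noteq> 0" using that s by auto
    have r: "Re z = s" by (simp add: s_def)
    show ?thesis
      unfolding E_def Q_def r using expand_sq[of "z" s a "\<lambda>z. F (p z)", OF s s0 a1] .
  qed
  define S1 where "S1 = {z. z \<in> \<real> \<and> Re z < 0}"
  define p1 where "p1 = (\<lambda>z. \<zeta> * (1 + z))"
  have dp1: "(p1 has_field_derivative \<zeta>) (at 0)" unfolding p1_def
    by (auto intro!: derivative_eq_intros)
  have p10: "p1 0 = \<zeta>" by (simp add: p1_def)
  have nt1: "\<not> trivial_limit (at 0 within S1)"
    unfolding trivial_limit_within islimpt_approachable
  proof (intro notI, elim notE, intro allI impI)
    fix e :: real assume "0 < e"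
    then show "\<exists>x'\<in>S1. x' \<noteq> 0 \<and> dist x' 0 < e"
      by (intro bexI[of _ "complex_of_real (-e/2)"]) (auto simp: S1_def)
  qed
  have ev1: "eventually (\<lambda>z. 0 \<le> E p1 z \<and> E p1 z \<le> 2 + Re z) (at 0 within S1)"
  proof -
    have "eventually (\<lambda>z. dist z 0 < 1) (at 0 within S1)"
      by (auto simp: eventually_at intro!: exI[of _ 1])
    moreover have "eventually (\<lambda>z. z \<in> S1 \<and> z \<noteq> 0) (at 0 within S1)"
      by (simp add: eventually_at_filter)
    ultimately show ?thesis using evU[OF dp1 p10, of S1]
    proof eventually_elim
      case (elim z)
      then have zr: "z \<in> \<real>" and zneg: "Re z < 0" and zd: "cmod z < 1" by (auto simp: S1_def)
      define s where "s = Re z"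
      have s: "z = complex_of_real s" unfolding s_def using zr by simp
      have sn: "s < 0" "s > -1" using zneg zd s by auto
      have p1z: "p1 z = \<zeta> * complex_of_real (1+s)" by (simp add: p1_def s)
      have "norm (p1 z) = norm \<zeta> * \<bar>1+s\<bar>" unfolding p1z norm_mult norm_of_real by (rule refl)
      then have np: "norm (p1 z) = 1 + s" using sn z1 by simp
      have b: "norm (p1 z) \<le> norm (F (p1 z)) \<and> norm (F (p1 z)) \<le> 1"
        using bd[of "p1 z"] elim np sn by auto
      have e: "(cmod (F (p1 z)))^2 = 1 + s * E p1 z" using eq[OF zr] elim s by auto
      have b1: "(cmod (F (p1 z)))^2 \<le> 1" using b by (simp add: power_le_one)
      have b2: "(1+s)^2 \<le> (cmod (F (p1 z)))^2" using b np sn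
        by (metis power_mono add_nonneg_nonneg le_add_same_cancel1 norm_ge_zero)
      have "s * E p1 z \<le> 0" using b1 e by linarith
      then have "0 \<le> E p1 z" using sn by (simp add: mult_le_0_iff)
      moreover have "s * (2 + s) \<le> s * E p1 z" using b2 e by (simp add: power2_eq_square algebra_simps)
      then have "E p1 z \<le> 2 + s" using sn mult_le_cancel_left_neg by blast
      ultimately show ?case using s by simp
    qed
  qed
  have L1: "0 \<le> 2*Re(cnj a * (c*\<zeta>))"
  proof -
    have "eventually (\<lambda>z. 0 \<le> E p1 z) (at 0 within S1)" using ev1 by (rule eventually_mono) auto
    from tendsto_lowerbound[OF Elim[OF dp1 p10, of S1] this nt1] show ?thesis .
  qed
  have lim2: "((\<lambda>z. 2 + Re z) \<longlongrightarrow> 2) (at 0 within S1)"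
    using tendsto_add[OF tendsto_const[of 2] tendsto_Re[OF tendsto_ident_at[of 0 S1]]] by simp
  have L2: "2*Re(cnj a * (c*\<zeta>)) \<le> 2"
  proof -
    have "eventually (\<lambda>z. E p1 z \<le> 2 + Re z) (at 0 within S1)" using ev1 by (rule eventually_mono) auto
    from tendsto_le[OF nt1 lim2 Elim[OF dp1 p10, of S1] this] show ?thesis .
  qed
  define p2 where "p2 = (\<lambda>z. \<zeta> * exp (\<i> * z))"
  have dp2: "(p2 has_field_derivative \<zeta> * \<i>) (at 0)" unfolding p2_def
    by (auto intro!: derivative_eq_intros)
  have p20: "p2 0 = \<zeta>" by (simp add: p2_def)
  have nt2: "\<not> trivial_limit (at (0::complex) within \<real>)"
    unfolding trivial_limit_within islimpt_approachable
  proof (intro notI, elim notE, intro allI impI)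
    fix e :: real assume "0 < e"
    then show "\<exists>x'\<in>\<real>. x' \<noteq> (0::complex) \<and> dist x' 0 < e"
      by (intro bexI[of _ "complex_of_real (-e/2)"]) auto
  qed
  have ev2: "eventually (\<lambda>z. E p2 z = 0) (at 0 within \<real>)"
  proof -
    have "eventually (\<lambda>z. z \<in> \<real> \<and> z \<noteq> 0) (at 0 within \<real>)"
      by (simp add: eventually_at_filter)
    then show ?thesis using evU[OF dp2 p20, of \<real>]
    proof eventually_elim
      case (elim z)
      define s where "s = Re z"
      have s: "z = complex_of_real s" unfolding s_def using elim by simp
      have sn: "s \<noteq> 0" using elim s by auto
      have np: "norm (p2 z) = 1" using s z1 by (simp add: p2_def norm_mult)
      have b: "norm (F (p2 z)) = 1" using bd[of "p2 z"] elim np by auto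
      have e: "(cmod (F (p2 z)))^2 = 1 + s * E p2 z" using eq elim s by auto
      then show ?case using b sn by simp
    qed
  qed
  have L3: "2*Re(cnj a * (c*(\<zeta>*\<i>))) = 0"
    using tendsto_unique[OF nt2 Elim[OF dp2 p20, of \<real>]] tendsto_eventually[OF ev2]
    by (metis (no_types, lifting) Lim_transform_eventually ev2 tendsto_const)
  define l where "l = cnj a * c * \<zeta>"
  have "Im l = 0" using L3 unfolding l_def by (simp add: algebra_simps)
  moreover have "0 \<le> Re l" "Re l \<le> 1" using L1 L2 unfolding l_def by (simp_all add: algebra_simps)
  ultimately have "cmod l \<le> 1" by (simp add: cmod_def)
  moreover have "cmod l = cmod c" using a1 z1 by (simp add: l_def norm_mult)
  ultimately show ?thesis by (simp add: c_def)
qed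

lemma arc_interior_empty:
  fixes c :: "real \<Rightarrow> complex"
  assumes "continuous_on {0..t} c" "inj_on c {0..t}"
  shows "interior (c ` {0..t}) = {}"
proof (rule ccontr)
  assume "interior (c ` {0..t}) \<noteq> {}"
  then obtain x where "x \<in> interior (c ` {0..t})" by blast
  then obtain e where e: "e > 0" "ball x e \<subseteq> c ` {0..t}" using mem_interior by blast
  obtain g where hom: "homeomorphism {0..t} (c ` {0..t}) c g"
    using homeomorphism_compact[OF compact_Icc assms(1) refl assms(2)] by blast
  from hom have gc: "continuous_on (c ` {0..t}) g" and gi: "\<forall>y\<in>c ` {0..t}. c (g y) = y"
    unfolding homeomorphism_def by auto
  have "continuous_on (ball x e) g" by (rule continuous_on_subset[OF gc e(2)])
  moreover have "inj_on g (ball x e)"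
    by (rule inj_on_inverseI[where g=c]) (use gi e(2) in blast)
  ultimately have "DIM(complex) \<le> DIM(real)" using invariance_of_dimension[of "ball x e" g] e by auto
  then show False by simp
qed

theorem lemma17:
  fixes m :: nat and T :: real and \<gamma> :: "nat \<Rightarrow> real \<Rightarrow> complex"
  assumes "m \<in> {1, 2}" and "0 < T"
    and "\<forall>k\<in>{1..m}. jordan_arc_on T (\<gamma> k)"
    and "\<forall>k\<in>{1..m}. \<gamma> k ` {0..T} \<subseteq> cball 0 1 - {0}"
    and "\<forall>k\<in>{1..m}. \<gamma> k 0 \<in> sphere 0 1"
    and "\<forall>k\<in>{1..m}. \<gamma> k ` {0<..T} \<subseteq> unit_disk"
    and "\<forall>j\<in>{1..m}. \<forall>k\<in>{1..m}. j \<noteq> k \<longrightarrow> \<gamma> j ` {0<..T} \<inter> \<gamma> k ` {0<..T} = {}"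
  shows "\<forall>t\<in>{0..T}. \<forall>k\<in>{1..m}. \<forall>g h \<zeta> U F.
     normalized_conformal_map (unit_disk - (\<Union>j\<in>{1..m}. \<gamma> j ` {0..t})) g \<and>
     normalized_conformal_map (unit_disk - \<gamma> k ` {0..t}) h \<and>
     (h \<longlongrightarrow> \<zeta>) (at (\<gamma> k t) within (unit_disk - \<gamma> k ` {0..t})) \<and>
     open U \<and> \<zeta> \<in> U \<and> F holomorphic_on U \<and>
     (\<forall>w \<in> U \<inter> h ` (unit_disk - (\<Union>j\<in>{1..m}. \<gamma> j ` {0..t})).
         F w = g (inv_into (unit_disk - \<gamma> k ` {0..t}) h w))
     \<longrightarrow> cmod (deriv F \<zeta>) \<le> 1"
proof (intro ballI allI impI, elim conjE)
  fix t k g h \<zeta> U F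
  assume t: "t \<in> {0..T}" and k: "k \<in> {1..m}"
  assume H1: "normalized_conformal_map (unit_disk - (\<Union>j\<in>{1..m}. \<gamma> j ` {0..t})) g"
    and H2: "normalized_conformal_map (unit_disk - \<gamma> k ` {0..t}) h"
    and H3: "(h \<longlongrightarrow> \<zeta>) (at (\<gamma> k t) within (unit_disk - \<gamma> k ` {0..t}))"
    and oU: "open U" and zU: "\<zeta> \<in> U" and holF: "F holomorphic_on U"
    and H7: "\<forall>w \<in> U \<inter> h ` (unit_disk - (\<Union>j\<in>{1..m}. \<gamma> j ` {0..t})).
         F w = g (inv_into (unit_disk - \<gamma> k ` {0..t}) h w)"
  define A where "A = (\<Union>j\<in>{1..m}. \<gamma> j ` {0..t})"
  define Ak where "Ak = \<gamma> k ` {0..t}"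
  define \<Omega> where "\<Omega> = unit_disk - A"
  define \<Omega>k where "\<Omega>k = unit_disk - Ak"
  have gmap: "normalized_conformal_map \<Omega> g" unfolding \<Omega>_def A_def by (rule H1)
  have hmap: "normalized_conformal_map \<Omega>k h" unfolding \<Omega>k_def Ak_def by (rule H2)
  have lim: "(h \<longlongrightarrow> \<zeta>) (at (\<gamma> k t) within \<Omega>k)" unfolding \<Omega>k_def Ak_def by (rule H3)
  have Feq: "\<forall>w \<in> U \<inter> h ` \<Omega>. F w = g (inv_into \<Omega>k h w)"
    unfolding \<Omega>k_def Ak_def \<Omega>_def A_def by (rule H7)
  have sub: "{0..t} \<subseteq> {0..T}" using t by auto
  have arcj: "continuous_on {0..t} (\<gamma> j) \<and> inj_on (\<gamma> j) {0..t}" if "j \<in> {1..m}" for j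
  proof -
    have "jordan_arc_on T (\<gamma> j)" using assms(3) that by blast
    then have c: "continuous_on {0..T} (\<gamma> j)" and i: "inj_on (\<gamma> j) {0..T}"
      unfolding jordan_arc_on_def by auto
    show ?thesis using continuous_on_subset[OF c sub] inj_on_subset[OF i sub] by simp
  qed
  have int_arc: "interior (\<gamma> j ` {0..t}) = {}" if "j \<in> {1..m}" for j
    using arc_interior_empty[OF conjunct1[OF arcj[OF that]] conjunct2[OF arcj[OF that]]] .
  have cl_arc: "closed (\<gamma> j ` {0..t})" if "j \<in> {1..m}" for j
    using compact_imp_closed[OF compact_continuous_image[OF conjunct1[OF arcj[OF that]] compact_Icc]] .
  have intA: "interior A = {}"
  proof (cases "m = 1")
    case True
    then have "A = \<gamma> 1 ` {0..t}" by (simp add: A_def)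
    then show ?thesis using int_arc[of 1] True by simp
  next
    case False
    then have m2: "m = 2" using assms(1) by auto
    then have "{1..m} = {1,2::nat}" by auto
    then have "A = \<gamma> 1 ` {0..t} \<union> \<gamma> 2 ` {0..t}" by (simp add: A_def)
    then show ?thesis using interior_closed_Un_empty_interior[OF cl_arc[of 1] int_arc[of 2]]
      int_arc[of 1] m2 by simp
  qed
  have clA: "closed A" unfolding A_def using cl_arc by (intro closed_UN) auto
  have AkA: "Ak \<subseteq> A" using k by (auto simp: A_def Ak_def)
  have clAk: "closed Ak" using cl_arc k by (simp add: Ak_def)
  have intAk: "interior Ak = {}" using int_arc k by (simp add: Ak_def)
  have o\<Omega>: "open \<Omega>" by (simp add: \<Omega>_def open_Diff clA)
  have o\<Omega>k: "open \<Omega>k" by (simp add: \<Omega>k_def open_Diff clAk)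
  have \<Omega>\<Omega>k: "\<Omega> \<subseteq> \<Omega>k" using AkA by (auto simp: \<Omega>_def \<Omega>k_def)
  have "0 \<notin> A"
  proof
    assume "0 \<in> A"
    then obtain j where j: "j \<in> {1..m}" "0 \<in> \<gamma> j ` {0..t}" unfolding A_def by blast
    then have "0 \<in> \<gamma> j ` {0..T}" using sub by blast
    then show False using assms(4) j(1) by blast
  qed
  then have O0: "0 \<in> \<Omega>" by (simp add: \<Omega>_def)
  have gh: "g holomorphic_on \<Omega>" "inj_on g \<Omega>" "g ` \<Omega> = unit_disk" "g 0 = 0"
    using gmap unfolding normalized_conformal_map_def by auto
  have hh: "h holomorphic_on \<Omega>k" "inj_on h \<Omega>k" "h ` \<Omega>k = unit_disk" "h 0 = 0"
    using hmap unfolding normalized_conformal_map_def by auto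
  have hcont: "continuous_on \<Omega>k h" using hh(1) holomorphic_on_imp_continuous_on by blast
  have "\<exists>ginv. ginv holomorphic_on (g ` \<Omega>) \<and> (\<forall>z\<in>\<Omega>. ginv (g z) = z)"
  proof (rule holomorphic_has_inverse[OF gh(1) o\<Omega> gh(2)])
    fix ga assume "ga holomorphic_on (g ` \<Omega>)" "\<And>z. z \<in> \<Omega> \<Longrightarrow> ga (g z) = z"
    then show "\<exists>ginv. ginv holomorphic_on (g ` \<Omega>) \<and> (\<forall>z\<in>\<Omega>. ginv (g z) = z)" by blast
  qed
  then obtain ginv where ginvh: "ginv holomorphic_on (g ` \<Omega>)"
    and ginv0: "\<forall>z\<in>\<Omega>. ginv (g z) = z" by blast
  have ginv: "ginv (g z) = z" if "z \<in> \<Omega>" for z using ginv0 that by blast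
  have ginv_im: "ginv u \<in> \<Omega>" if "u \<in> unit_disk" for u
  proof -
    have "u \<in> g ` \<Omega>" using that gh(3) by simp
    then obtain z where z: "z \<in> \<Omega>" "u = g z" by blast
    have "ginv u = z" unfolding z(2) by (rule ginv[OF z(1)])
    with z(1) show ?thesis by simp
  qed
  have schw: "norm (h w) \<le> norm (g w)" if w: "w \<in> \<Omega>" for w
  proof -
    define \<Phi> where "\<Phi> = h \<circ> ginv"
    have im: "ginv ` unit_disk \<subseteq> \<Omega>" using ginv_im by blast
    have gd: "ginv holomorphic_on unit_disk" using ginvh gh(3) by simp
    have "\<Phi> holomorphic_on unit_disk" unfolding \<Phi>_def
      by (rule holomorphic_on_compose_gen[OF gd holomorphic_on_subset[OF hh(1) \<Omega>\<Omega>k] im])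
    moreover have "ginv 0 = 0" using ginv[OF O0] unfolding gh(4) .
    then have "\<Phi> 0 = 0" unfolding \<Phi>_def o_def using hh(4) by simp
    moreover have "norm (\<Phi> z) < 1" if "norm z < 1" for z
    proof -
      have "ginv z \<in> \<Omega>k" using ginv_im[of z] that \<Omega>\<Omega>k by auto
      then have "h (ginv z) \<in> h ` \<Omega>k" by (rule imageI)
      then have "h (ginv z) \<in> unit_disk" unfolding hh(3) .
      then show ?thesis unfolding \<Phi>_def o_def by simp
    qed
    moreover have "norm (g w) < 1" using gh(3) w by auto
    ultimately have "norm (\<Phi> (g w)) \<le> norm (g w)" using Schwarz_Lemma(1) by blast
    then show ?thesis unfolding \<Phi>_def using ginv[OF w] by simp
  qed
  define G where "G = U \<inter> h ` \<Omega>"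
  have Gprop: "norm y \<le> norm (F y) \<and> norm (F y) < 1" if yG: "y \<in> G" for y
  proof -
    obtain w where w: "w \<in> \<Omega>" "y = h w" and yU: "y \<in> U" using yG unfolding G_def by blast
    have "inv_into \<Omega>k h y = w" using w \<Omega>\<Omega>k hh(2) by (auto intro: inv_into_f_f)
    then have "F y = g w" using Feq yG unfolding G_def by auto
    moreover have "norm (g w) < 1" using gh(3) w by auto
    ultimately show ?thesis using schw[OF w(1)] w by simp
  qed
  have dense: "z islimpt G" if zU': "z \<in> U" and zn: "norm z \<le> 1" for z
    unfolding islimpt_def
  proof (intro allI impI)
    fix T assume zT: "z \<in> T" and oT: "open T"
    have "z islimpt unit_disk" using zn by (simp add: islimpt_ball)
    then obtain y where y: "y \<in> unit_disk" "y \<in> T \<inter> U" "y \<noteq> z"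
      using islimptE[of z unit_disk "T \<inter> U"] zT zU' oT oU by blast
    define V where "V = T \<inter> U \<inter> unit_disk - {z}"
    have oV: "open V" unfolding V_def using oT oU by (intro open_Diff open_Int) auto
    have yV: "y \<in> V" using y by (simp add: V_def)
    show "\<exists>y\<in>G. y \<in> T \<and> y \<noteq> z"
    proof (rule ccontr)
      assume nex: "\<not> (\<exists>y\<in>G. y \<in> T \<and> y \<noteq> z)"
      define W where "W = h -` V \<inter> \<Omega>k"
      have oW: "open W" unfolding W_def using continuous_on_open_vimage[OF o\<Omega>k] hcont oV by blast
      obtain w where w: "w \<in> \<Omega>k" "h w = y" using y(1) hh(3) by (metis imageE)
      have wW: "w \<in> W" using w yV by (simp add: W_def)
      have WA: "W \<subseteq> A"
      proof
        fix w' assume w': "w' \<in> W"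
        show "w' \<in> A"
        proof (rule ccontr)
          assume "w' \<notin> A"
          then have "w' \<in> \<Omega>" using w' by (auto simp: W_def \<Omega>k_def \<Omega>_def)
          then have "h w' \<in> G" using w' by (auto simp: W_def V_def G_def)
          then show False using nex w' by (auto simp: W_def V_def)
        qed
      qed
      have "w \<in> interior A" using interior_maximal[OF WA oW] wW by blast
      then show False using intA by simp
    qed
  qed
  have bounds: "norm z \<le> norm (F z) \<and> norm (F z) \<le> 1" if zU': "z \<in> U" and zn: "norm z \<le> 1" for z
  proof -
    have "isCont F z"
      using holomorphic_on_imp_continuous_on[OF holF] continuous_on_eq_continuous_at[OF oU] zU' by blast
    then have "(F \<longlongrightarrow> F z) (at z)" by (simp add: isCont_def)
    then have Ft: "(F \<longlongrightarrow> F z) (at z within G)" by (rule tendsto_mono[OF at_le[OF subset_UNIV]])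
    have nt: "\<not> trivial_limit (at z within G)" using dense[OF zU' zn] trivial_limit_within by blast
    have evG: "eventually (\<lambda>y. y \<in> G) (at z within G)" by (simp add: eventually_at_filter)
    have ev1: "eventually (\<lambda>y. 0 \<le> norm (F y) - norm y) (at z within G)"
      using evG by (rule eventually_mono) (use Gprop in auto)
    have ev2: "eventually (\<lambda>y. norm (F y) \<le> 1) (at z within G)"
      using evG by (rule eventually_mono) (use Gprop in fastforce)
    have "0 \<le> norm (F z) - norm z"
      using tendsto_lowerbound[OF tendsto_diff[OF tendsto_norm[OF Ft] tendsto_norm[OF tendsto_ident_at]] ev1 nt] .
    moreover have "norm (F z) \<le> 1" using tendsto_upperbound[OF tendsto_norm[OF Ft] ev2 nt] .
    ultimately show ?thesis by simp
  qed
  define p where "p = \<gamma> k t"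
  have pAk: "p \<in> Ak" using t by (auto simp: p_def Ak_def)
  have pn: "norm p \<le> 1"
  proof -
    have "p \<in> \<gamma> k ` {0..T}" using t unfolding p_def by blast
    then have "p \<in> cball 0 1" using assms(4) k by blast
    then show ?thesis by simp
  qed
  have plim: "p islimpt \<Omega>k" unfolding islimpt_def
  proof (intro allI impI)
    fix T assume pT: "p \<in> T" and oT: "open T"
    have "p islimpt unit_disk" using pn by (simp add: islimpt_ball)
    then obtain y where y: "y \<in> unit_disk" "y \<in> T" "y \<noteq> p"
      using islimptE[of p unit_disk T] pT oT by blast
    define V where "V = T \<inter> unit_disk - {p}"
    have oV: "open V" unfolding V_def using oT by (intro open_Diff open_Int) auto
    have yV: "y \<in> V" using y by (simp add: V_def)
    have "\<not> V \<subseteq> Ak"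
    proof
      assume "V \<subseteq> Ak"
      then have "y \<in> interior Ak" using interior_maximal[OF _ oV] yV by blast
      then show False using intAk by simp
    qed
    then obtain v where "v \<in> V" "v \<notin> Ak" by blast
    then show "\<exists>y\<in>\<Omega>k. y \<in> T \<and> y \<noteq> p" by (auto simp: V_def \<Omega>k_def)
  qed
  have ntp: "\<not> trivial_limit (at p within \<Omega>k)" using plim trivial_limit_within by blast
  have evk: "eventually (\<lambda>y. y \<in> \<Omega>k) (at p within \<Omega>k)" by (simp add: eventually_at_filter)
  have lim': "(h \<longlongrightarrow> \<zeta>) (at p within \<Omega>k)" using lim by (simp add: p_def)
  have "norm \<zeta> \<le> 1"
  proof -
    have "eventually (\<lambda>y. norm (h y) \<le> 1) (at p within \<Omega>k)"
    proof -
      have hin: "norm (h x) < 1" if "x \<in> \<Omega>k" for x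
      proof -
        have "h x \<in> h ` \<Omega>k" using that by (rule imageI)
        then have "h x \<in> unit_disk" unfolding hh(3) .
        then show ?thesis by simp
      qed
      show ?thesis using evk by (rule eventually_mono) (simp add: hin less_imp_le)
    qed
    from tendsto_upperbound[OF tendsto_norm[OF lim'] this ntp] show ?thesis .
  qed
  moreover have "\<not> norm \<zeta> < 1"
  proof
    assume "norm \<zeta> < 1"
    then have "\<zeta> \<in> h ` \<Omega>k" using hh(3) by simp
    then obtain w where w: "w \<in> \<Omega>k" "h w = \<zeta>" by blast
    have wp: "w \<noteq> p" using w pAk by (auto simp: \<Omega>k_def)
    obtain r0 where r0: "r0 > 0" "ball w r0 \<subseteq> \<Omega>k" using o\<Omega>k w(1) openE by blast
    define r where "r = min r0 (dist w p / 2)"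
    have r: "r > 0" "ball w r \<subseteq> \<Omega>k" "2 * r \<le> dist w p" using r0 wp by (auto simp: r_def)
    have "open (h ` ball w r)"
      using invariance_of_domain[of "ball w r" h] continuous_on_subset[OF hcont r(2)]
        inj_on_subset[OF hh(2) r(2)] by blast
    moreover have "\<zeta> \<in> h ` ball w r" using w r(1) by force
    ultimately have ev1: "eventually (\<lambda>y. h y \<in> h ` ball w r) (at p within \<Omega>k)"
      using topological_tendstoD[OF lim'] by blast
    have ev2: "eventually (\<lambda>y. dist y p < r) (at p within \<Omega>k)"
      using r(1) by (auto simp: eventually_at)
    have "eventually (\<lambda>y. False) (at p within \<Omega>k)"
      using ev1 ev2 evk
    proof eventually_elim
      case (elim y)
      then obtain y' where y': "y' \<in> ball w r" "h y = h y'" by blast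
      then have "y = y'" using hh(2) r(2) elim(3) by (meson inj_onD subsetD)
      then have "dist w y < r" using y' by simp
      then have "dist w p < 2 * r" using elim(2) dist_triangle[of w p y] by (simp add: dist_commute)
      then show False using r(3) by simp
    qed
    then show False using ntp by (simp add: eventually_False)
  qed
  ultimately have z1: "norm \<zeta> = 1" by simp
  show "cmod (deriv F \<zeta>) \<le> 1"
    using boundary_deriv[OF holF oU zU z1 bounds] by blast
qed

end
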